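(* Let $L=\mathbb Z^2$ with $B(x,y)=x\begin{pmatrix}2&1\\1&8\end{pmatrix}y^T$, $Q(x)=\frac12B(x,x)$, and for $\alpha,\beta\in\mathbb Q^2$ put $\theta_{\alpha,\beta}(\tau,z)=\sum_{v\in\mathbb Z^2}e(B(\beta,v))\,e(\tau Q(\alpha+v)+B(\alpha+v,z))$ on $\mathbb H\times\mathbb C^2$. Then the 25 functions $\theta_{\alpha,\beta}^5$ with $\alpha\in\{(0,0),(\frac15,\frac35),(\frac25,\frac15),(\frac35,\frac45),(\frac45,\frac25)\}$ and $\beta\in\{(\frac j5,0):j=0,1,2,3,4\}$ are $\mathbb C$-linearly independent.
   Context: $e(x)=\exp(2\pi ix)$, $\mathbb H$ the upper half plane; $B$ is extended bilinearly to $\mathbb C^2$. *)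

theory Defs
  imports "HOL-Analysis.Analysis"
begin

definition e :: "complex \<Rightarrow> complex" where
  "e x = exp (2 * of_real pi * \<i> * x)"

definition B :: "complex \<times> complex \<Rightarrow> complex \<times> complex \<Rightarrow> complex" where
  "B x y = 2 * fst x * fst y + fst x * snd y + snd x * fst y + 8 * snd x * snd y"

definition Q :: "complex \<times> complex \<Rightarrow> complex" where
  "Q x = B x x / 2"

definition ratv :: "rat \<times> rat \<Rightarrow> complex \<times> complex" where
  "ratv a = (of_rat (fst a), of_rat (snd a))"

definition intv :: "int \<times> int \<Rightarrow> complex \<times> complex" where
  "intv v = (of_int (fst v), of_int (snd v))"

text \<open>theta_{alpha,beta}(tau,z) = sum over v in Z^2 (absolutely convergent on H x C^2).\<close>
definition theta :: "rat \<times> rat \<Rightarrow> rat \<times> rat \<Rightarrow> complex \<Rightarrow> complex \<times> complex \<Rightarrow> complex" where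
  "theta \<alpha> \<beta> \<tau> z =
     (\<Sum>\<^sub>\<infinity>v\<in>(UNIV :: (int \<times> int) set).
        e (B (ratv \<beta>) (intv v)) * e (\<tau> * Q (ratv \<alpha> + intv v) + B (ratv \<alpha> + intv v) z))"

definition alphas :: "nat \<Rightarrow> rat \<times> rat" where
  "alphas k = [(0, 0), (1/5, 3/5), (2/5, 1/5), (3/5, 4/5), (4/5, 2/5)] ! k"

definition betas :: "nat \<Rightarrow> rat \<times> rat" where
  "betas j = (of_nat j / 5, 0)"

end

theory Submission
  imports Defs
begin

lemma of_rat_complex: "(of_rat q :: complex) = of_real (of_rat q)"
  by (cases q) (simp add: of_rat_rat)

definition hh :: "int \<Rightarrow> real" where "hh n = exp (- pi * \<bar>of_int n\<bar>)"

lemma hh_summable: "hh summable_on UNIV"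
proof -
  have U: "(UNIV::int set) = range int \<union> range (\<lambda>n. - int (Suc n))"
  proof -
    have "x \<in> range int \<union> range (\<lambda>n. - int (Suc n))" for x :: int
    proof (cases "x \<ge> 0")
      case True then show ?thesis by (metis UnI1 nonneg_int_cases rangeI)
    next
      case False then have "x = - int (Suc (nat (-x - 1)))" by simp
      then show ?thesis by blast
    qed
    then show ?thesis by blast
  qed
  have g: "summable (\<lambda>n. exp (-pi) ^ n)" by (rule summable_geometric) simp
  have 1: "hh summable_on range int"
  proof -
    have e: "(hh \<circ> int) = (\<lambda>n. exp (-pi) ^ n)"
      by (auto simp: hh_def fun_eq_iff simp flip: exp_of_nat_mult)
    have "(hh \<circ> int) summable_on UNIV"
      unfolding e by (subst summable_on_UNIV_nonneg_real_iff) (auto simp: g)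
    then show ?thesis by (subst summable_on_reindex) auto
  qed
  have 2: "hh summable_on range (\<lambda>n. - int (Suc n))"
  proof -
    have e: "(hh \<circ> (\<lambda>n. - int (Suc n))) = (\<lambda>n. exp (-pi) * exp (-pi) ^ n)"
      by (auto simp: hh_def fun_eq_iff algebra_simps simp flip: exp_of_nat_mult exp_add)
    have "(hh \<circ> (\<lambda>n. - int (Suc n))) summable_on UNIV"
      unfolding e by (subst summable_on_UNIV_nonneg_real_iff) (auto intro: summable_mult g)
    then show ?thesis by (subst summable_on_reindex) (auto simp: inj_on_def)
  qed
  show ?thesis unfolding U
    by (rule summable_on_Un_disjoint[OF 1 2]) auto
qed

lemma hh2_summable: "(\<lambda>v::int\<times>int. hh (fst v) * hh (snd v)) summable_on UNIV"
proof -
  have "(\<lambda>v::int\<times>int. hh (fst v) * hh (snd v)) summable_on Sigma UNIV (\<lambda>_. UNIV)"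
  proof (rule summable_on_SigmaI)
    show "((\<lambda>y. hh (fst (x, y)) * hh (snd (x, y))) has_sum hh x * infsum hh UNIV) UNIV" for x
      by (simp add: has_sum_cmult_right hh_summable)
    show "(\<lambda>x. hh x * infsum hh UNIV) summable_on UNIV"
      by (simp add: summable_on_cmult_left hh_summable)
    show "0 \<le> hh (fst (x, y)) * hh (snd (x, y))" for x y by (simp add: hh_def)
  qed
  then show ?thesis by simp
qed

definition Qr :: "real \<times> real \<Rightarrow> real" where
  "Qr p = fst p ^ 2 + fst p * snd p + 4 * snd p ^ 2"
definition intr :: "int \<times> int \<Rightarrow> real \<times> real" where
  "intr v = (of_int (fst v), of_int (snd v))"

lemma Qr_ge: "Qr p \<ge> 0" "2 * Qr p \<ge> fst p ^ 2 + snd p ^ 2"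
proof -
  have "2 * Qr p - (fst p ^ 2 + snd p ^ 2) = (fst p + snd p)^2 + 6 * snd p ^ 2"
    by (simp add: Qr_def power2_eq_square algebra_simps)
  moreover have "(fst p + snd p)^2 + 6 * snd p ^ 2 \<ge> 0" by simp
  ultimately show "2 * Qr p \<ge> fst p ^ 2 + snd p ^ 2" by linarith
  then show "Qr p \<ge> 0" by (smt (verit) zero_le_power2)
qed

lemma sq_ge_abs: "(x::real)^2 \<ge> \<bar>x\<bar> - 1/4"
proof -
  have "(\<bar>x\<bar> - 1/2)^2 \<ge> 0" by simp
  then show ?thesis by (simp add: power2_eq_square algebra_simps abs_mult_self_eq)
qed

lemma gauss_summable: "(\<lambda>v. exp (-2*pi * Qr (intr v + c))) summable_on UNIV"
proof -
  define K where "K = exp (pi * (\<bar>fst c\<bar> + \<bar>snd c\<bar>) + pi/2)"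
  have "(\<lambda>v::int\<times>int. K * (hh (fst v) * hh (snd v))) summable_on UNIV"
    by (rule summable_on_cmult_right[OF hh2_summable])
  moreover have "exp (-2*pi * Qr (intr v + c)) \<le> K * (hh (fst v) * hh (snd v))" for v
  proof -
    define p1 where "p1 = of_int (fst v) + fst c"
    define p2 where "p2 = of_int (snd v) + snd c"
    have q: "2 * Qr (intr v + c) \<ge> p1^2 + p2^2"
      using Qr_ge(2)[of "intr v + c"] by (simp add: intr_def p1_def p2_def)
    have a1: "\<bar>p1\<bar> \<ge> \<bar>of_int (fst v)\<bar> - \<bar>fst c\<bar>" unfolding p1_def by linarith
    have a2: "\<bar>p2\<bar> \<ge> \<bar>of_int (snd v)\<bar> - \<bar>snd c\<bar>" unfolding p2_def by linarith
    have "2 * Qr (intr v + c) \<ge> \<bar>of_int (fst v)\<bar> + \<bar>of_int (snd v)\<bar> - (\<bar>fst c\<bar> + \<bar>snd c\<bar>) - 1/2"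
      using q a1 a2 sq_ge_abs[of p1] sq_ge_abs[of p2] by linarith
    then have "pi * (2 * Qr (intr v + c)) \<ge> pi * (\<bar>of_int (fst v)\<bar> + \<bar>of_int (snd v)\<bar> - (\<bar>fst c\<bar> + \<bar>snd c\<bar>) - 1/2)"
      using pi_gt_zero by (intro mult_left_mono) auto
    then have "-2*pi * Qr (intr v + c) \<le> (pi * (\<bar>fst c\<bar> + \<bar>snd c\<bar>) + pi/2) + (- pi * \<bar>of_int (fst v)\<bar>) + (- pi * \<bar>of_int (snd v)\<bar>)"
      by (simp add: algebra_simps)
    then have "exp (-2*pi * Qr (intr v + c)) \<le> exp ((pi * (\<bar>fst c\<bar> + \<bar>snd c\<bar>) + pi/2) + (- pi * \<bar>of_int (fst v)\<bar>) + (- pi * \<bar>of_int (snd v)\<bar>))"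
      by simp
    also have "\<dots> = K * (hh (fst v) * hh (snd v))"
      unfolding K_def hh_def mult_exp_exp by (rule arg_cong[where f=exp]) (simp add: algebra_simps)
    finally show ?thesis .
  qed
  ultimately show ?thesis
    by (rule summable_on_comparison_test) auto
qed

lemma expansion:
  fixes u :: "int\<times>int \<Rightarrow> complex" and q :: "int\<times>int \<Rightarrow> real"
  assumes u: "\<And>v. norm (u v) \<le> 1" and q0: "\<And>v. q v \<ge> 0"
    and S: "(\<lambda>v. exp (-2*pi*q v)) summable_on UNIV" and M: "finite M"
    and d: "\<And>v. v \<notin> M \<Longrightarrow> q v \<ge> \<delta>" and t: "t \<ge> 1"
  shows "norm ((\<Sum>\<^sub>\<infinity>v. u v * of_real (exp (-2*pi*t*q v))) - (\<Sum>v\<in>M. u v * of_real (exp (-2*pi*t*q v))))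
          \<le> (\<Sum>\<^sub>\<infinity>v. exp (-2*pi*q v)) * exp (-2*pi*(t-1)*\<delta>)"
proof -
  define f where "f v = u v * of_real (exp (-2*pi*t*q v))" for v
  define g where "g v = exp (-2*pi*q v)" for v
  have fg: "norm (f v) \<le> g v" for v
  proof -
    have "norm (f v) \<le> exp (-2*pi*t*q v)"
      using u[of v] by (simp add: f_def norm_mult mult_left_le_one_le)
    also have "\<dots> \<le> g v" unfolding g_def
      using q0[of v] t pi_gt_zero by (simp add: mult_le_cancel_right1 mult_right_mono)
    finally show ?thesis .
  qed
  have gs0: "g summable_on UNIV" using S unfolding g_def[abs_def] .
  have gabs: "(\<lambda>v. norm (g v)) summable_on UNIV" using S
    by (simp add: g_def summable_on_iff_abs_summable_on_real[symmetric])
  have fabs: "(\<lambda>v. norm (f v)) summable_on UNIV"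
    by (rule summable_on_comparison_test[OF gs0]) (use fg in auto)
  then have fs: "f summable_on UNIV" by (rule abs_summable_summable)
  have fs2: "f summable_on (UNIV - M)" by (rule summable_on_subset_banach[OF fs]) auto
  have fabs2: "(\<lambda>v. norm (f v)) summable_on (UNIV - M)" by (rule summable_on_subset_banach[OF fabs]) auto
  have split: "infsum f UNIV = infsum f M + infsum f (UNIV - M)"
  proof -
    have "infsum f (M \<union> (UNIV - M)) = infsum f M + infsum f (UNIV - M)"
      by (rule infsum_Un_disjoint) (use M fs2 in auto)
    then show ?thesis by simp
  qed
  have gs: "g summable_on UNIV" by (rule gs0)
  have gs2: "g summable_on (UNIV - M)" by (rule summable_on_subset[OF gs]) auto
  have "norm (infsum f UNIV - sum f M) = norm (infsum f (UNIV - M))"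
    using split M by simp
  also have "\<dots> \<le> infsum (\<lambda>v. norm (f v)) (UNIV - M)"
    by (rule norm_infsum_bound[OF fabs2])
  also have "\<dots> \<le> infsum (\<lambda>v. g v * exp (-2*pi*(t-1)*\<delta>)) (UNIV - M)"
  proof (rule infsum_mono[OF fabs2])
    show "(\<lambda>v. g v * exp (-2*pi*(t-1)*\<delta>)) summable_on UNIV - M"
      by (rule summable_on_cmult_left[OF gs2])
    fix v assume v: "v \<in> UNIV - M"
    have "norm (f v) \<le> exp (-2*pi*t*q v)"
      using u[of v] by (simp add: f_def norm_mult mult_left_le_one_le)
    also have "\<dots> = g v * exp (-2*pi*(t-1)*q v)"
      unfolding g_def mult_exp_exp by (rule arg_cong[where f=exp]) (simp add: algebra_simps)
    also have "\<dots> \<le> g v * exp (-2*pi*(t-1)*\<delta>)"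
    proof -
      have "(t-1)*\<delta> \<le> (t-1) * q v" using d[of v] v t by (intro mult_left_mono) auto
      then have "-2*pi*(t-1)*q v \<le> -2*pi*(t-1)*\<delta>" using pi_gt_zero by simp
      then show ?thesis by (simp add: g_def)
    qed
    finally show "norm (f v) \<le> g v * exp (-2*pi*(t-1)*\<delta>)" .
  qed
  also have "\<dots> = infsum g (UNIV - M) * exp (-2*pi*(t-1)*\<delta>)"
    by (rule infsum_cmult_left') 
  also have "\<dots> \<le> infsum g UNIV * exp (-2*pi*(t-1)*\<delta>)"
  proof (rule mult_right_mono)
    show "infsum g (UNIV - M) \<le> infsum g UNIV"
      by (rule infsum_mono_neutral[OF gs2 gs]) (auto simp: g_def)
  qed simp
  finally show ?thesis unfolding f_def[abs_def] g_def[abs_def] .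
qed

definition Br :: "real \<times> real \<Rightarrow> real \<times> real \<Rightarrow> real" where
  "Br x y = 2 * fst x * fst y + fst x * snd y + snd x * fst y + 8 * snd x * snd y"
definition ratr :: "rat \<times> rat \<Rightarrow> real \<times> real" where
  "ratr a = (of_rat (fst a), of_rat (snd a))"
definition cpx :: "real \<times> real \<Rightarrow> complex \<times> complex" where
  "cpx p = (of_real (fst p), of_real (snd p))"
definition zt :: "real \<times> real \<Rightarrow> real \<times> real \<Rightarrow> real \<Rightarrow> complex \<times> complex" where
  "zt y l t = (- (\<i> * of_real t) * of_real (fst y) + of_real (fst l),
               - (\<i> * of_real t) * of_real (snd y) + of_real (snd l))"
definition uu :: "rat \<times> rat \<Rightarrow> rat \<times> rat \<Rightarrow> real \<times> real \<Rightarrow> int \<times> int \<Rightarrow> complex" where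
  "uu \<alpha> \<beta> l v = e (B (ratv \<beta>) (intv v)) * e (of_real (Br (ratr \<alpha> + intr v) l))"

lemma ratv_intv: "ratv \<alpha> + intv v = cpx (ratr \<alpha> + intr v)"
  by (simp add: ratv_def intv_def cpx_def ratr_def intr_def of_rat_complex)

lemma arg_identity:
  "2 * of_real pi * \<i> * ((\<i> * of_real t) * Q (cpx X) + B (cpx X) (zt y l t)) + of_real (-2*pi*t*Qr y)
   = 2 * of_real pi * \<i> * of_real (Br X l) + of_real (-2*pi*t*Qr (X - y))"
proof -
  obtain a b where X: "X = (a, b)" by (cases X)
  obtain y1 y2 where Y: "y = (y1, y2)" by (cases y)
  obtain l1 l2 where L: "l = (l1, l2)" by (cases l)
  show ?thesis
    unfolding X Y L
    by (simp add: Q_def B_def Qr_def Br_def zt_def cpx_def power2_eq_square field_simps)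
qed

lemma e_term:
  "e ((\<i> * of_real t) * Q (cpx X) + B (cpx X) (zt y l t)) * of_real (exp (-2*pi*t*Qr y))
   = e (of_real (Br X l)) * of_real (exp (-2*pi*t*Qr (X - y)))"
proof -
  have "e ((\<i> * of_real t) * Q (cpx X) + B (cpx X) (zt y l t)) * of_real (exp (-2*pi*t*Qr y))
      = exp (2 * of_real pi * \<i> * ((\<i> * of_real t) * Q (cpx X) + B (cpx X) (zt y l t)) + of_real (-2*pi*t*Qr y))"
    by (simp only: e_def exp_add exp_of_real)
  also have "\<dots> = exp (2 * of_real pi * \<i> * of_real (Br X l) + of_real (-2*pi*t*Qr (X - y)))"
    by (simp only: arg_identity)
  also have "\<dots> = e (of_real (Br X l)) * of_real (exp (-2*pi*t*Qr (X - y)))"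
    by (simp only: e_def exp_add exp_of_real)
  finally show ?thesis .
qed

lemma theta_repr:
  "theta \<alpha> \<beta> (\<i> * of_real t) (zt y l t) * of_real (exp (-2*pi*t*Qr y))
   = (\<Sum>\<^sub>\<infinity>v. uu \<alpha> \<beta> l v * of_real (exp (-2*pi*t*Qr (ratr \<alpha> + intr v - y))))"
  unfolding theta_def infsum_cmult_left'[symmetric]
proof (rule infsum_cong)
  fix v
  show "e (B (ratv \<beta>) (intv v)) * e (\<i> * complex_of_real t * Q (ratv \<alpha> + intv v) + B (ratv \<alpha> + intv v) (zt y l t)) *
         complex_of_real (exp (- 2 * pi * t * Qr y)) =
         uu \<alpha> \<beta> l v * complex_of_real (exp (- 2 * pi * t * Qr (ratr \<alpha> + intr v - y)))"
  proof -
    have "e (B (ratv \<beta>) (intv v)) * e (\<i> * complex_of_real t * Q (ratv \<alpha> + intv v) + B (ratv \<alpha> + intv v) (zt y l t)) *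
         complex_of_real (exp (- 2 * pi * t * Qr y)) = e (B (ratv \<beta>) (intv v)) * (e (\<i> * complex_of_real t * Q (cpx (ratr \<alpha> + intr v)) + B (cpx (ratr \<alpha> + intr v)) (zt y l t)) *
         complex_of_real (exp (- 2 * pi * t * Qr y)))"
      by (simp only: ratv_intv mult.assoc)
    also have "\<dots> = e (B (ratv \<beta>) (intv v)) * (e (of_real (Br (ratr \<alpha> + intr v) l)) * complex_of_real (exp (- 2 * pi * t * Qr (ratr \<alpha> + intr v - y))))"
      by (rule arg_cong[where f="\<lambda>x. e (B (ratv \<beta>) (intv v)) * x"], rule e_term)
    also have "\<dots> = uu \<alpha> \<beta> l v * complex_of_real (exp (- 2 * pi * t * Qr (ratr \<alpha> + intr v - y)))"
      by (simp only: uu_def mult.assoc)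
    finally show ?thesis .
  qed
qed

lemma norm_e_real: "norm (e (of_real x)) = 1"
  unfolding e_def by (simp add: norm_exp)

lemma B_cpx: "B (cpx a) (cpx b) = of_real (Br a b)"
  by (simp add: B_def Br_def cpx_def)

lemma ratv_cpx: "ratv a = cpx (ratr a)"
  by (simp add: ratv_def ratr_def cpx_def of_rat_complex)
lemma intv_cpx: "intv a = cpx (intr a)"
  by (simp add: intv_def intr_def cpx_def)

lemma norm_uu: "norm (uu \<alpha> \<beta> l v) = 1"
  by (simp add: uu_def norm_mult ratv_cpx intv_cpx B_cpx norm_e_real)

lemma pow5_diff:
  fixes a b :: complex
  assumes A: "norm a \<le> E" and B: "norm b \<le> E"
  shows "norm (a^5 - b^5) \<le> 5 * E^4 * norm (a - b)"
proof -
  have E0: "E \<ge> 0" using A norm_ge_zero order_trans by blast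
  have id: "a^5 - b^5 = (a - b) * (\<Sum>i<5. a^i * b^(4-i))"
    by (simp add: algebra_simps power_def numeral_eq_Suc)
  have t: "norm (a^i * b^(4-i)) \<le> E^4" if "i < 5" for i
  proof -
    have "norm (a^i * b^(4-i)) = norm a ^ i * norm b ^ (4-i)" by (simp add: norm_mult norm_power)
    also have "\<dots> \<le> E^i * E^(4-i)"
      by (intro mult_mono power_mono) (use A B E0 in auto)
    also have "\<dots> = E^4" using that by (simp flip: power_add)
    finally show ?thesis .
  qed
  have "norm (\<Sum>i<5. a^i * b^(4-i)) \<le> (\<Sum>i<(5::nat). E^4)"
    by (rule order_trans[OF norm_sum sum_mono]) (use t in auto)
  then have "norm (\<Sum>i<5. a^i * b^(4-i)) \<le> 5 * E^4" by simp
  then show ?thesis unfolding id norm_mult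
    by (metis mult.commute mult_right_mono norm_ge_zero)
qed

definition Th :: "rat \<times> rat \<Rightarrow> rat \<times> rat \<Rightarrow> real \<times> real \<Rightarrow> real \<times> real \<Rightarrow> real \<Rightarrow> complex" where
  "Th \<alpha> \<beta> y l t = theta \<alpha> \<beta> (\<i> * of_real t) (zt y l t) * of_real (exp (-2*pi*t*Qr y))"

definition GG :: "rat \<times> rat \<Rightarrow> real \<times> real \<Rightarrow> real" where
  "GG \<alpha> y = (\<Sum>\<^sub>\<infinity>v. exp (-2*pi*Qr (ratr \<alpha> + intr v - y)))"

lemma coset_bound:
  assumes M: "finite M" and Mm: "\<And>v. v\<in>M \<Longrightarrow> Qr (ratr \<alpha> + intr v - y) \<ge> m"
    and Md: "\<And>v. v\<notin>M \<Longrightarrow> Qr (ratr \<alpha> + intr v - y) \<ge> \<delta>" and md: "m \<le> \<delta>" and t: "t \<ge> 1"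
  shows "norm (Th \<alpha> \<beta> y l t ^ 5 - (\<Sum>v\<in>M. uu \<alpha> \<beta> l v * of_real (exp (-2*pi*t*Qr (ratr \<alpha> + intr v - y))))^5)
     \<le> 5 * (GG \<alpha> y * exp (2*pi*\<delta>) + real (card M))^4 * (GG \<alpha> y * exp (2*pi*\<delta>)) * exp (-2*pi*t*(4*m+\<delta>))"
proof -
  define q where "q v = Qr (ratr \<alpha> + intr v - y)" for v
  define P where "P = (\<Sum>v\<in>M. uu \<alpha> \<beta> l v * of_real (exp (-2*pi*t*q v)))"
  define C1 where "C1 = GG \<alpha> y * exp (2*pi*\<delta>)"
  have qeq: "q v = Qr (intr v + (ratr \<alpha> - y))" for v
    unfolding q_def by (simp add: algebra_simps)
  have S: "(\<lambda>v. exp (-2*pi*q v)) summable_on UNIV"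
    unfolding qeq by (rule gauss_summable)
  have Th_eq: "Th \<alpha> \<beta> y l t = (\<Sum>\<^sub>\<infinity>v. uu \<alpha> \<beta> l v * of_real (exp (-2*pi*t*q v)))"
    unfolding Th_def theta_repr q_def ..
  have GG0: "GG \<alpha> y \<ge> 0" unfolding GG_def by (rule infsum_nonneg) auto
  have C10: "C1 \<ge> 0" unfolding C1_def using GG0 by simp
  have R: "norm (Th \<alpha> \<beta> y l t - P) \<le> C1 * exp (-2*pi*t*\<delta>)"
  proof -
    have "norm (Th \<alpha> \<beta> y l t - P) \<le> (\<Sum>\<^sub>\<infinity>v. exp (-2*pi*q v)) * exp (-2*pi*(t-1)*\<delta>)"
      unfolding Th_eq P_def
      by (rule expansion[OF _ _ S M]) (use norm_uu Qr_ge(1) Md t in \<open>auto simp: q_def\<close>)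
    also have "\<dots> = C1 * exp (-2*pi*t*\<delta>)"
      unfolding C1_def GG_def q_def[symmetric] mult.assoc mult_exp_exp
      by (rule arg_cong[where f="\<lambda>x. _ * exp x"]) (simp add: algebra_simps)
    finally show ?thesis .
  qed
  have ed: "exp (-2*pi*t*\<delta>) \<le> exp (-2*pi*t*m)"
    using md t pi_gt_zero by (simp add: mult_left_mono)
  have Pb: "norm P \<le> real (card M) * exp (-2*pi*t*m)"
  proof -
    have "norm P \<le> (\<Sum>v\<in>M. exp (-2*pi*t*m))"
      unfolding P_def
    proof (rule order_trans[OF norm_sum sum_mono])
      fix v assume "v \<in> M"
      then have "q v \<ge> m" using Mm q_def by auto
      then have "exp (-2*pi*t*q v) \<le> exp (-2*pi*t*m)"
        using t pi_gt_zero by (simp add: mult_left_mono)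
      then show "norm (uu \<alpha> \<beta> l v * of_real (exp (-2*pi*t*q v))) \<le> exp (-2*pi*t*m)"
        by (simp add: norm_mult norm_uu)
    qed
    then show ?thesis by simp
  qed
  define E where "E = (C1 + real (card M)) * exp (-2*pi*t*m)"
  have PE: "norm P \<le> E" unfolding E_def using Pb C10
    by (smt (verit, best) distrib_right exp_gt_zero mult_nonneg_nonneg)
  have ThE: "norm (Th \<alpha> \<beta> y l t) \<le> E"
  proof -
    have "norm (Th \<alpha> \<beta> y l t) \<le> norm P + norm (Th \<alpha> \<beta> y l t - P)"
      by (metis add.commute diff_add_cancel norm_triangle_ineq)
    also have "\<dots> \<le> real (card M) * exp (-2*pi*t*m) + C1 * exp (-2*pi*t*m)"
      using Pb R ed C10 by (smt (verit) mult_left_mono)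
    finally show ?thesis unfolding E_def by (simp add: algebra_simps)
  qed
  have "norm (Th \<alpha> \<beta> y l t ^ 5 - P^5) \<le> 5 * E^4 * norm (Th \<alpha> \<beta> y l t - P)"
    by (rule pow5_diff[OF ThE PE])
  also have "\<dots> \<le> 5 * E^4 * (C1 * exp (-2*pi*t*\<delta>))"
    by (rule mult_left_mono[OF R]) (use E_def C10 in simp)
  also have "\<dots> = 5 * (C1 + real (card M))^4 * C1 * (exp (-2*pi*t*m)^4 * exp (-2*pi*t*\<delta>))"
    unfolding E_def by (simp only: power_mult_distrib) (simp add: algebra_simps)
  also have "exp (-2*pi*t*m)^4 * exp (-2*pi*t*\<delta>) = exp (-2*pi*t*(4*m+\<delta>))"
    by (simp flip: exp_of_nat_mult exp_add add: algebra_simps)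
  finally show ?thesis unfolding C1_def P_def q_def .
qed

definition aa :: "nat \<Rightarrow> int" where "aa k = int k"
definition bb :: "nat \<Rightarrow> int" where "bb k = [0,3,1,4,2] ! k"
definition DD :: "nat \<Rightarrow> nat \<Rightarrow> int" where "DD k k' = (2*(aa k' - aa k) + (bb k' - bb k)) div 5"
definition sv :: "nat \<Rightarrow> nat \<Rightarrow> int \<times> int \<Rightarrow> int" where "sv k k' v = DD k k' + 2 * fst v + snd v"
definition wv :: "nat \<Rightarrow> nat \<Rightarrow> int \<times> int \<Rightarrow> int" where "wv k k' v = bb k' - bb k + 5 * snd v"

lemma lt5: "k < (5::nat) \<longleftrightarrow> k = 0 \<or> k = 1 \<or> k = 2 \<or> k = 3 \<or> k = 4" by auto

lemma ratr_alphas: "k < 5 \<Longrightarrow> ratr (alphas k) = (of_int (aa k) / 5, of_int (bb k) / 5)"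
  unfolding lt5 by (auto simp: ratr_def alphas_def aa_def bb_def of_rat_divide)

lemma DD_prop: "k < 5 \<Longrightarrow> k' < 5 \<Longrightarrow> 5 * DD k k' = 2*(aa k' - aa k) + (bb k' - bb k)"
  unfolding lt5 by (auto simp: DD_def aa_def bb_def)

lemma par_prop: "k < 5 \<Longrightarrow> k' < 5 \<Longrightarrow> even (DD k k' - (bb k' - bb k))"
  unfolding lt5 by (auto simp: DD_def aa_def bb_def)

lemma diag_prop: "DD k k = 0"
  by (simp add: DD_def)

lemma offdiag: "k < 5 \<Longrightarrow> k' < 5 \<Longrightarrow> k \<noteq> k' \<Longrightarrow> (bb k' - bb k) mod 5 \<noteq> 0"
  unfolding lt5 by (auto simp: bb_def)

lemma Qr20: "20 * Qr p = 5 * (2 * fst p + snd p)^2 + 75 * (snd p)^2"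
  by (simp add: Qr_def power2_eq_square algebra_simps)

lemma qform:
  assumes "k < 5" "k' < 5"
  shows "20 * Qr (ratr (alphas k') + intr v - (ratr (alphas k) + (c, 0)))
         = 5 * (of_int (sv k k' v) - 2*c)^2 + 3 * (of_int (wv k k' v))^2"
proof -
  have D: "real_of_int (DD k k') = (2*(of_int (aa k') - of_int (aa k)) + (of_int (bb k') - of_int (bb k)))/5"
    using DD_prop[OF assms] by (simp add: field_simps)
  show ?thesis
    unfolding Qr20 using assms
    by (simp add: ratr_alphas intr_def sv_def wv_def D power2_eq_square field_simps)
qed

lemma sqge: "\<bar>x::int\<bar> \<ge> n \<Longrightarrow> 0 \<le> n \<Longrightarrow> x^2 \<ge> n^2"
  by (metis power2_abs power_mono)

lemma I1: "5 dvd w \<Longrightarrow> even (x - w) \<Longrightarrow> (x,w) \<noteq> (0,0) \<Longrightarrow> 5*x^2 + 3*w^2 \<ge> (20::int)"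
proof (cases "w = 0")
  case True
  assume "even (x - w)" "(x,w) \<noteq> (0,0)"
  then have "\<bar>x\<bar> \<ge> 2" using True by (simp; presburger)
  then have "x^2 \<ge> 4" using sqge[of 2 x] by simp
  then show ?thesis using True by simp
next
  case False
  assume "5 dvd w"
  then have "\<bar>w\<bar> \<ge> 5" using False by presburger
  then have "w^2 \<ge> 25" using sqge[of 5 w] by simp
  moreover have "x^2 \<ge> 0" by simp
  ultimately show ?thesis by linarith
qed

lemma I2: "\<not> 5 dvd w \<Longrightarrow> even (x - w) \<Longrightarrow> 5*x^2 + 3*w^2 \<ge> (8::int)"
proof (cases "odd w")
  case True
  assume "even (x - w)"
  then have "\<bar>x\<bar> \<ge> 1" "\<bar>w\<bar> \<ge> 1" using True by presburger+
  then have "x^2 \<ge> 1" "w^2 \<ge> 1" using sqge[of 1 x] sqge[of 1 w] by simp_all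
  then show ?thesis by linarith
next
  case False
  assume "\<not> 5 dvd w"
  then have "\<bar>w\<bar> \<ge> 2" using False by presburger
  then have "w^2 \<ge> 4" using sqge[of 2 w] by simp
  moreover have "x^2 \<ge> 0" by simp
  ultimately show ?thesis by linarith
qed

lemma I3: "5 dvd w \<Longrightarrow> even (x - w) \<Longrightarrow> (x,w) \<noteq> (0,0) \<Longrightarrow> (x,w) \<noteq> (2,0) \<Longrightarrow> 5*(x-1)^2 + 3*w^2 \<ge> (45::int)"
proof (cases "w = 0")
  case True
  assume "even (x - w)" "(x,w) \<noteq> (0,0)" "(x,w) \<noteq> (2,0)"
  then have "\<bar>x - 1\<bar> \<ge> 3" using True by (simp; presburger)
  then have "(x-1)^2 \<ge> 9" using sqge[of 3 "x-1"] by simp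
  then show ?thesis using True by simp
next
  case False
  assume "5 dvd w"
  then have "\<bar>w\<bar> \<ge> 5" using False by presburger
  then have "w^2 \<ge> 25" using sqge[of 5 w] by simp
  moreover have "(x-1)^2 \<ge> 0" by simp
  ultimately show ?thesis by linarith
qed

lemma I4: "w mod 5 = 1 \<Longrightarrow> even (x - w) \<Longrightarrow> (x,w) \<noteq> (1,1) \<Longrightarrow> 5*(x-1)^2 + 3*w^2 \<ge> (23::int)"
proof (cases "w = 1")
  case True
  assume "even (x - w)" "(x,w) \<noteq> (1,1)"
  then have "\<bar>x - 1\<bar> \<ge> 2" using True by (simp; presburger)
  then have "(x-1)^2 \<ge> 4" using sqge[of 2 "x-1"] by simp
  then show ?thesis using True by simp
next
  case False
  assume "w mod 5 = 1"
  then have "\<bar>w\<bar> \<ge> 4" using False by presburger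
  then have "w^2 \<ge> 16" using sqge[of 4 w] by simp
  moreover have "(x-1)^2 \<ge> 0" by simp
  ultimately show ?thesis by linarith
qed

lemma I5: "w mod 5 = 4 \<Longrightarrow> even (x - w) \<Longrightarrow> (x,w) \<noteq> (1,-1) \<Longrightarrow> 5*(x-1)^2 + 3*w^2 \<ge> (23::int)"
proof (cases "w = -1")
  case True
  assume "even (x - w)" "(x,w) \<noteq> (1,-1)"
  then have "\<bar>x - 1\<bar> \<ge> 2" using True by (simp; presburger)
  then have "(x-1)^2 \<ge> 4" using sqge[of 2 "x-1"] by simp
  then show ?thesis using True by simp
next
  case False
  assume "w mod 5 = 4"
  then have "\<bar>w\<bar> \<ge> 4" using False by presburger
  then have "w^2 \<ge> 16" using sqge[of 4 w] by simp
  moreover have "(x-1)^2 \<ge> 0" by simp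
  ultimately show ?thesis by linarith
qed

lemma I6: "w mod 5 = 2 \<or> w mod 5 = 3 \<Longrightarrow> even (x - w) \<Longrightarrow> 5*(x-1)^2 + 3*w^2 \<ge> (17::int)"
proof (cases "\<bar>w\<bar> = 2")
  case True
  assume "even (x - w)"
  then have "\<bar>x - 1\<bar> \<ge> 1" using True by presburger
  then have "(x-1)^2 \<ge> 1" using sqge[of 1 "x-1"] by simp
  moreover have "w^2 = 4" using True by (metis power2_abs numeral_Bit0 power2_eq_square mult_2 numeral_One one_add_one)
  ultimately show ?thesis by linarith
next
  case False
  assume "w mod 5 = 2 \<or> w mod 5 = 3"
  then have "\<bar>w\<bar> \<ge> 3" using False by presburger
  then have "w^2 \<ge> 9" using sqge[of 3 w] by simp
  moreover have "(x-1)^2 \<ge> 0" by simp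
  ultimately show ?thesis by linarith
qed

abbreviation qq :: "nat \<Rightarrow> nat \<Rightarrow> real \<Rightarrow> int \<times> int \<Rightarrow> real" where
  "qq k k' c v \<equiv> Qr (ratr (alphas k') + intr v - (ratr (alphas k) + (c, 0)))"

lemma wv_mod: "wv k k' v mod 5 = (bb k' - bb k) mod 5"
  by (simp add: wv_def)

lemma par_sw: "k < 5 \<Longrightarrow> k' < 5 \<Longrightarrow> even (sv k k' v - wv k k' v)"
proof -
  assume a: "k < 5" "k' < 5"
  have "sv k k' v - wv k k' v = (DD k k' - (bb k' - bb k)) + 2 * (fst v - 2 * snd v)"
    by (simp add: sv_def wv_def algebra_simps)
  then show ?thesis using par_prop[OF a] by simp
qed

lemma sw_diag: "sv k k v = 2 * fst v + snd v" "wv k k v = 5 * snd v"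
  by (simp_all add: sv_def wv_def diag_prop)

lemma q20: "k < 5 \<Longrightarrow> k' < 5 \<Longrightarrow> qq k k' c v = (5 * (of_int (sv k k' v) - 2*c)^2 + 3 * (of_int (wv k k' v))^2) / 20"
  using qform[of k k' v c] by simp

lemma A_diag0: "k < 5 \<Longrightarrow> qq k k 0 (0,0) = 0"
  by (subst q20) (simp_all add: sw_diag)

lemma A_diag: "k < 5 \<Longrightarrow> v \<noteq> (0,0) \<Longrightarrow> qq k k 0 v \<ge> 1"
proof -
  assume k: "k < 5" and v: "v \<noteq> (0,0)"
  have "(sv k k v, wv k k v) \<noteq> (0,0)" using v by (cases v) (auto simp: sw_diag)
  then have "5 * (sv k k v)^2 + 3 * (wv k k v)^2 \<ge> 20"
    using I1[of "wv k k v" "sv k k v"] par_sw[OF k k] by (simp add: sw_diag)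
  then have "5 * (real_of_int (sv k k v))^2 + 3 * (real_of_int (wv k k v))^2 \<ge> 20"
    by (metis (mono_tags, opaque_lifting) of_int_add of_int_le_iff of_int_mult of_int_numeral of_int_power)
  then show ?thesis unfolding q20[OF k(1) k(1)] by simp
qed

lemma A_off: "k < 5 \<Longrightarrow> k' < 5 \<Longrightarrow> k \<noteq> k' \<Longrightarrow> qq k k' 0 v \<ge> 2/5"
proof -
  assume k: "k < 5" "k' < 5" "k \<noteq> k'"
  have "\<not> 5 dvd wv k k' v" using offdiag[OF k] wv_mod[of k k' v] by presburger
  then have "5 * (sv k k' v)^2 + 3 * (wv k k' v)^2 \<ge> 8"
    using I2 par_sw[OF k(1,2)] by blast
  then have "5 * (real_of_int (sv k k' v))^2 + 3 * (real_of_int (wv k k' v))^2 \<ge> 8"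
    by (metis (mono_tags, opaque_lifting) of_int_add of_int_le_iff of_int_mult of_int_numeral of_int_power)
  then show ?thesis unfolding q20[OF k(1) k(2)] by simp
qed

lemma C_diag0: "k < 5 \<Longrightarrow> v \<in> {(0,0),(1,0)} \<Longrightarrow> qq k k (1/2) v = 1/4"
  by (subst q20) (auto simp: sw_diag)

lemma C_diag: "k < 5 \<Longrightarrow> v \<notin> {(0,0),(1,0)} \<Longrightarrow> qq k k (1/2) v \<ge> 9/4"
proof -
  assume k: "k < 5" and v: "v \<notin> {(0,0),(1,0)}"
  have "(sv k k v, wv k k v) \<noteq> (0,0)" "(sv k k v, wv k k v) \<noteq> (2,0)" using v by (cases v; auto simp: sw_diag)+
  then have "5 * (sv k k v - 1)^2 + 3 * (wv k k v)^2 \<ge> 45"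
    using I3[of "wv k k v" "sv k k v"] par_sw[OF k k] by (simp add: sw_diag)
  then have "5 * (real_of_int (sv k k v) - 1)^2 + 3 * (real_of_int (wv k k v))^2 \<ge> 45"
    by (metis (mono_tags, opaque_lifting) of_int_add of_int_diff of_int_1 of_int_le_iff of_int_mult of_int_numeral of_int_power)
  then show ?thesis unfolding q20[OF k(1) k(1)] by simp
qed

lemma C_off23: "k < 5 \<Longrightarrow> k' < 5 \<Longrightarrow> (bb k' - bb k) mod 5 = 2 \<or> (bb k' - bb k) mod 5 = 3 \<Longrightarrow> qq k k' (1/2) v \<ge> 17/20"
proof -
  assume k: "k < 5" "k' < 5" and m: "(bb k' - bb k) mod 5 = 2 \<or> (bb k' - bb k) mod 5 = 3"
  have "5 * (sv k k' v - 1)^2 + 3 * (wv k k' v)^2 \<ge> 17"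
    using I6[of "wv k k' v" "sv k k' v"] par_sw[OF k] m wv_mod[of k k' v] by simp
  then have "5 * (real_of_int (sv k k' v) - 1)^2 + 3 * (real_of_int (wv k k' v))^2 \<ge> 17"
    by (metis (mono_tags, opaque_lifting) of_int_add of_int_diff of_int_1 of_int_le_iff of_int_mult of_int_numeral of_int_power)
  then show ?thesis unfolding q20[OF k(1) k(2)] by simp
qed

lemma ex1: "even ((D::int) - X) \<Longrightarrow> X mod 5 = 1 \<Longrightarrow> \<exists>v1 v2::int. D + 2 * v1 + v2 = 1 \<and> X + 5 * v2 = 1"
  by presburger
lemma ex4: "even ((D::int) - X) \<Longrightarrow> X mod 5 = 4 \<Longrightarrow> \<exists>v1 v2::int. D + 2 * v1 + v2 = 1 \<and> X + 5 * v2 = -1"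
  by presburger

lemma C_off1:
  assumes k: "k < 5" "k' < 5" and m: "(bb k' - bb k) mod 5 = 1"
  shows "\<exists>v0. qq k k' (1/2) v0 = 3/20 \<and> (\<forall>v. v \<noteq> v0 \<longrightarrow> qq k k' (1/2) v \<ge> 23/20)"
proof -
  have P: "even (DD k k' - (bb k' - bb k))" by (rule par_prop[OF k])
  obtain v1 v2 where e: "DD k k' + 2 * v1 + v2 = 1" "bb k' - bb k + 5 * v2 = 1"
    using ex1[OF P m] by blast
  define v0 where "v0 = (v1, v2)"
  have sw0: "sv k k' v0 = 1" "wv k k' v0 = 1" using e by (simp_all add: v0_def sv_def wv_def)
  have "qq k k' (1/2) v0 = 3/20" using k by (simp add: q20 sw0)
  moreover have "qq k k' (1/2) v \<ge> 23/20" if "v \<noteq> v0" for v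
  proof -
    have "(sv k k' v, wv k k' v) \<noteq> (1,1)"
    proof
      assume "(sv k k' v, wv k k' v) = (1,1)"
      then have "snd v = v2" "fst v = v1" using e by (auto simp: sv_def wv_def)
      then show False using that by (auto simp: v0_def prod_eq_iff)
    qed
    then have "5 * (sv k k' v - 1)^2 + 3 * (wv k k' v)^2 \<ge> 23"
      using I4[of "wv k k' v" "sv k k' v"] par_sw[OF k] m wv_mod[of k k' v] by simp
    then have "5 * (real_of_int (sv k k' v) - 1)^2 + 3 * (real_of_int (wv k k' v))^2 \<ge> 23"
      by (metis (mono_tags, opaque_lifting) of_int_add of_int_diff of_int_1 of_int_le_iff of_int_mult of_int_numeral of_int_power)
    then show ?thesis unfolding q20[OF k(1) k(2)] by simp
  qed
  ultimately show ?thesis by blast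
qed

lemma C_off4:
  assumes k: "k < 5" "k' < 5" and m: "(bb k' - bb k) mod 5 = 4"
  shows "\<exists>v0. qq k k' (1/2) v0 = 3/20 \<and> (\<forall>v. v \<noteq> v0 \<longrightarrow> qq k k' (1/2) v \<ge> 23/20)"
proof -
  have P: "even (DD k k' - (bb k' - bb k))" by (rule par_prop[OF k])
  obtain v1 v2 where e: "DD k k' + 2 * v1 + v2 = 1" "bb k' - bb k + 5 * v2 = -1"
    using ex4[OF P m] by blast
  define v0 where "v0 = (v1, v2)"
  have sw0: "sv k k' v0 = 1" "wv k k' v0 = -1" using e by (simp_all add: v0_def sv_def wv_def)
  have "qq k k' (1/2) v0 = 3/20" using k by (simp add: q20 sw0)
  moreover have "qq k k' (1/2) v \<ge> 23/20" if "v \<noteq> v0" for v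
  proof -
    have "(sv k k' v, wv k k' v) \<noteq> (1,-1)"
    proof
      assume "(sv k k' v, wv k k' v) = (1,-1)"
      then have "snd v = v2" "fst v = v1" using e by (auto simp: sv_def wv_def)
      then show False using that by (auto simp: v0_def prod_eq_iff)
    qed
    then have "5 * (sv k k' v - 1)^2 + 3 * (wv k k' v)^2 \<ge> 23"
      using I5[of "wv k k' v" "sv k k' v"] par_sw[OF k] m wv_mod[of k k' v] by simp
    then have "5 * (real_of_int (sv k k' v) - 1)^2 + 3 * (real_of_int (wv k k' v))^2 \<ge> 23"
      by (metis (mono_tags, opaque_lifting) of_int_add of_int_diff of_int_1 of_int_le_iff of_int_mult of_int_numeral of_int_power)
    then show ?thesis unfolding q20[OF k(1) k(2)] by simp
  qed
  ultimately show ?thesis by blast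
qed

lemma sum_Th_zero:
  fixes c :: "nat \<Rightarrow> nat \<Rightarrow> complex"
  assumes H: "\<And>\<tau> z. Im \<tau> > 0 \<Longrightarrow>
             (\<Sum>i<5. \<Sum>j<5. c i j * (theta (alphas i) (betas j) \<tau> z) ^ 5) = 0"
    and t: "t > 0"
  shows "(\<Sum>i<5. \<Sum>j<5. c i j * Th (alphas i) (betas j) y l t ^ 5) = 0"
proof -
  define r where "r = (of_real (exp (-2*pi*t*Qr y)) :: complex)"
  have "(\<Sum>i<5. \<Sum>j<5. c i j * Th (alphas i) (betas j) y l t ^ 5)
      = (\<Sum>i<5. \<Sum>j<5. c i j * (theta (alphas i) (betas j) (\<i> * of_real t) (zt y l t)) ^ 5) * r^5"
    by (simp add: Th_def r_def sum_distrib_right power_mult_distrib mult.assoc)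
  also have "\<dots> = 0" using H[of "\<i> * of_real t" "zt y l t"] t by simp
  finally show ?thesis .
qed

lemma comb:
  fixes c A P :: "nat \<Rightarrow> nat \<Rightarrow> complex"
  assumes "(\<Sum>i<5. \<Sum>j<5. c i j * A i j) = 0"
    and "\<And>i j. i < 5 \<Longrightarrow> j < 5 \<Longrightarrow> norm (A i j - P i j) \<le> K i * E"
  shows "norm (\<Sum>i<5. \<Sum>j<5. c i j * P i j) \<le> (\<Sum>i<5. \<Sum>j<5. norm (c i j) * K i) * E"
proof -
  have "(\<Sum>i<5. \<Sum>j<5. c i j * P i j) = (\<Sum>i<5. \<Sum>j<5. c i j * P i j) - (\<Sum>i<5. \<Sum>j<5. c i j * A i j)"
    using assms(1) by simp
  also have "\<dots> = (\<Sum>i<5. \<Sum>j<5. c i j * (P i j - A i j))"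
    by (simp add: sum_subtractf algebra_simps)
  finally have eq: "(\<Sum>i<5. \<Sum>j<5. c i j * P i j) = (\<Sum>i<5. \<Sum>j<5. c i j * (P i j - A i j))" .
  have "norm (\<Sum>i<5. \<Sum>j<5. c i j * (P i j - A i j)) \<le> (\<Sum>i<5. \<Sum>j<5. norm (c i j) * (K i * E))"
  proof (rule order_trans[OF norm_sum sum_mono])
    fix i assume i: "i \<in> {..<5::nat}"
    show "norm (\<Sum>j<5. c i j * (P i j - A i j)) \<le> (\<Sum>j<5. norm (c i j) * (K i * E))"
    proof (rule order_trans[OF norm_sum sum_mono])
      fix j assume j: "j \<in> {..<5::nat}"
      have "norm (P i j - A i j) \<le> K i * E" using assms(2)[of i j] i j by (simp add: norm_minus_commute)
      then show "norm (c i j * (P i j - A i j)) \<le> norm (c i j) * (K i * E)"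
        by (simp add: norm_mult mult_left_mono)
    qed
  qed
  then show ?thesis unfolding eq by (simp add: sum_distrib_right mult.assoc)
qed

lemma vanish:
  fixes X :: complex
  assumes b: "\<And>t. t \<ge> 1 \<Longrightarrow> norm X * exp (-2*pi*t*a) \<le> K * exp (-2*pi*t*b)" and ab: "a < b"
  shows "X = 0"
proof -
  define r where "r = exp (-2*pi*(b-a))"
  have r1: "norm r < 1" unfolding r_def using ab pi_gt_zero by simp
  have le: "norm X \<le> K * r ^ n" if "n \<ge> 1" for n
  proof -
    have "norm X * exp (-2*pi*real n*a) \<le> K * exp (-2*pi*real n*b)" using b[of "real n"] that by simp
    then have "norm X \<le> K * exp (-2*pi*real n*b) / exp (-2*pi*real n*a)"
      by (simp add: field_simps)
    also have "K * exp (-2*pi*real n*b) / exp (-2*pi*real n*a) = K * exp (real n * (-2*pi*(b-a)))"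
      unfolding mult.assoc[of K] times_divide_eq_right[symmetric] exp_diff[symmetric]
      by (rule arg_cong[where f="\<lambda>x. K * exp x"]) (simp add: algebra_simps)
    also have "\<dots> = K * r ^ n" unfolding r_def exp_of_nat_mult[symmetric] ..
    finally show ?thesis .
  qed
  have "(\<lambda>n. K * r ^ n) \<longlonglongrightarrow> K * 0"
    by (intro tendsto_mult tendsto_const LIMSEQ_power_zero r1)
  then have "(\<lambda>n. K * r ^ n) \<longlonglongrightarrow> 0" by simp
  then have "norm X \<le> 0"
    by (rule LIMSEQ_le_const) (use le in auto)
  then show ?thesis by simp
qed

lemma GG_nonneg: "GG \<alpha> y \<ge> 0" unfolding GG_def by (rule infsum_nonneg) auto

lemma uu_zero: "uu \<alpha> \<beta> (0,0) (0,0) = 1"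
  by (simp add: uu_def B_def intv_def Br_def intr_def e_def)

lemma testA:
  fixes c :: "nat \<Rightarrow> nat \<Rightarrow> complex"
  assumes H: "\<And>\<tau> z. Im \<tau> > 0 \<Longrightarrow>
             (\<Sum>i<5. \<Sum>j<5. c i j * (theta (alphas i) (betas j) \<tau> z) ^ 5) = 0"
    and k: "k < 5"
  shows "(\<Sum>j<5. c k j) = 0"
proof -
  define y where "y = ratr (alphas k) + (0::real, 0::real)"
  define l where "l = (0::real, 0::real)"
  define M where "M i = (if i = k then {(0::int,0::int)} else {})" for i
  define m where "m i = (if i = k then 0 else 2/5::real)" for i
  define d where "d i = (if i = k then 1 else 2/5::real)" for i
  define K where "K i = 5 * (GG (alphas i) y * exp (2*pi*d i) + real (card (M i)))^4 * (GG (alphas i) y * exp (2*pi*d i))" for i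
  define P where "P t i j = (\<Sum>v\<in>M i. uu (alphas i) (betas j) l v * of_real (exp (-2*pi*t*Qr (ratr (alphas i) + intr v - y))))^5" for t i j
  have K0: "K i \<ge> 0" for i unfolding K_def using GG_nonneg by simp
  have bound: "norm (Th (alphas i) (betas j) y l t ^ 5 - P t i j) \<le> K i * exp (-2*pi*t*1)"
    if i: "i < 5" and t: "t \<ge> 1" for i j t
  proof -
    have "norm (Th (alphas i) (betas j) y l t ^ 5 - P t i j) \<le> K i * exp (-2*pi*t*(4 * m i + d i))"
      unfolding P_def K_def
    proof (rule coset_bound)
      show "finite (M i)" by (simp add: M_def)
      show "m i \<le> d i" by (simp add: m_def d_def)
      show "t \<ge> 1" by (rule t)
      show "Qr (ratr (alphas i) + intr v - y) \<ge> m i" if "v \<in> M i" for v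
        using that A_diag0[OF k] by (auto simp: M_def m_def y_def split: if_splits)
      show "Qr (ratr (alphas i) + intr v - y) \<ge> d i" if "v \<notin> M i" for v
      proof (cases "i = k")
        case True then show ?thesis using that A_diag[OF k, of v] by (simp add: M_def d_def y_def)
      next
        case False then show ?thesis using A_off[OF k i, of v] by (simp add: d_def y_def)
      qed
    qed
    also have "\<dots> \<le> K i * exp (-2*pi*t*1)"
    proof (rule mult_left_mono[OF _ K0])
      have "1 \<le> 4 * m i + d i" by (simp add: m_def d_def)
      then have "t * 1 \<le> t * (4 * m i + d i)" using t by (intro mult_left_mono) auto
      then show "exp (-2*pi*t*(4 * m i + d i)) \<le> exp (-2*pi*t*1)"
        using pi_gt_zero by simp
    qed
    finally show ?thesis .
  qed
  have Pk: "P t k j = 1" for t j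
  proof -
    have "Qr (ratr (alphas k) + intr (0,0) - y) = 0" using A_diag0[OF k] by (simp add: y_def)
    then show ?thesis by (simp add: P_def M_def uu_zero l_def)
  qed
  have sumP: "(\<Sum>i<5. \<Sum>j<5. c i j * P t i j) = (\<Sum>j<5. c k j)" for t
  proof -
    have "(\<Sum>j<5. c i j * P t i j) = (if i = k then (\<Sum>j<5. c k j) else 0)" for i
      by (cases "i = k") (simp_all add: Pk, simp add: P_def M_def)
    then have "(\<Sum>i<5. \<Sum>j<5. c i j * P t i j) = (\<Sum>i<5. if i = k then (\<Sum>j<5. c k j) else 0)"
      by (rule sum.cong[OF refl])
    also have "\<dots> = (\<Sum>j<5. c k j)" using k by (simp add: sum.delta)
    finally show ?thesis .
  qed
  show ?thesis
  proof (rule vanish[where a=0 and b=1])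
    fix t :: real assume t: "t \<ge> 1"
    have "norm (\<Sum>i<5. \<Sum>j<5. c i j * P t i j) \<le> (\<Sum>i<5. \<Sum>j<5. norm (c i j) * K i) * exp (-2*pi*t*1)"
      by (rule comb[OF sum_Th_zero[OF H]]) (use t bound in auto)
    then show "norm (\<Sum>j<5. c k j) * exp (-2*pi*t*0) \<le> (\<Sum>i<5. \<Sum>j<5. norm (c i j) * K i) * exp (-2*pi*t*1)"
      by (simp add: sumP)
  qed simp
qed

lemma e_pow: "e x ^ n = e (of_nat n * x)"
  unfolding e_def by (simp add: exp_of_nat_mult[symmetric] algebra_simps)

lemma e_int: "e (of_int n) = 1"
  unfolding e_def by (subst exp_eq_1) (auto intro!: exI[of _ n] simp: algebra_simps)

lemma B_betas5: "of_nat 5 * B (ratv (betas j)) (intv v) = of_int (int j * (2 * fst v + snd v))"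
  by (simp add: B_def betas_def ratv_def intv_def of_rat_divide algebra_simps)

lemma uu_pow5: "uu \<alpha> (betas j) l v ^ 5 = e (of_real (Br (ratr \<alpha> + intr v) l)) ^ 5"
proof -
  have "e (B (ratv (betas j)) (intv v)) ^ 5 = 1"
    unfolding e_pow B_betas5 e_int ..
  then show ?thesis by (simp add: uu_def power_mult_distrib)
qed

lemma mod5_cases: "k < 5 \<Longrightarrow> k' < 5 \<Longrightarrow> k' \<noteq> k \<Longrightarrow> \<not> ((bb k' - bb k) mod 5 = 1 \<or> (bb k' - bb k) mod 5 = 4)
   \<Longrightarrow> (bb k' - bb k) mod 5 = 2 \<or> (bb k' - bb k) mod 5 = 3"
  using offdiag[of k k'] by (smt (verit) pos_mod_bound pos_mod_sign)

lemma testC: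
  fixes c :: "nat \<Rightarrow> nat \<Rightarrow> complex"
  assumes H: "\<And>\<tau> z. Im \<tau> > 0 \<Longrightarrow>
             (\<Sum>i<5. \<Sum>j<5. c i j * (theta (alphas i) (betas j) \<tau> z) ^ 5) = 0"
    and k: "k < 5"
  shows "(\<Sum>j<5. c k j * (uu (alphas k) (betas j) (s,0) (0,0) + uu (alphas k) (betas j) (s,0) (1,0))^5) = 0"
proof -
  define y where "y = ratr (alphas k) + (1/2::real, 0::real)"
  define l where "l = (s::real, 0::real)"
  define good where "good i = ((bb i - bb k) mod 5 = 1 \<or> (bb i - bb k) mod 5 = 4)" for i
  define V where "V i = (SOME v0. qq k i (1/2) v0 = 3/20 \<and> (\<forall>v. v \<noteq> v0 \<longrightarrow> qq k i (1/2) v \<ge> 23/20))" for i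
  have V: "qq k i (1/2) (V i) = 3/20 \<and> (\<forall>v. v \<noteq> V i \<longrightarrow> qq k i (1/2) v \<ge> 23/20)" if "i < 5" "good i" for i
  proof -
    have "\<exists>v0. qq k i (1/2) v0 = 3/20 \<and> (\<forall>v. v \<noteq> v0 \<longrightarrow> qq k i (1/2) v \<ge> 23/20)"
      using that C_off1[OF k, of i] C_off4[OF k, of i] by (auto simp: good_def)
    then show ?thesis unfolding V_def by (rule someI_ex)
  qed
  define M where "M i = (if i = k then {(0::int,0::int),(1,0)} else if good i then {V i} else {})" for i
  define m where "m i = (if i = k then 1/4 else if good i then 3/20 else 17/20::real)" for i
  define d where "d i = (if i = k then 9/4 else if good i then 23/20 else 17/20::real)" for i
  define K where "K i = 5 * (GG (alphas i) y * exp (2*pi*d i) + real (card (M i)))^4 * (GG (alphas i) y * exp (2*pi*d i))" for i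
  define P where "P t i j = (\<Sum>v\<in>M i. uu (alphas i) (betas j) l v * of_real (exp (-2*pi*t*Qr (ratr (alphas i) + intr v - y))))^5" for t i j
  have K0: "K i \<ge> 0" for i unfolding K_def using GG_nonneg by simp
  have bound: "norm (Th (alphas i) (betas j) y l t ^ 5 - P t i j) \<le> K i * exp (-2*pi*t*(7/4))"
    if i: "i < 5" and t: "t \<ge> 1" for i j t
  proof -
    have "norm (Th (alphas i) (betas j) y l t ^ 5 - P t i j) \<le> K i * exp (-2*pi*t*(4 * m i + d i))"
      unfolding P_def K_def
    proof (rule coset_bound)
      show "finite (M i)" by (simp add: M_def)
      show "m i \<le> d i" by (simp add: m_def d_def)
      show "t \<ge> 1" by (rule t)
      show "Qr (ratr (alphas i) + intr v - y) \<ge> m i" if "v \<in> M i" for v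
      proof (cases "i = k")
        case True then show ?thesis using that C_diag0[OF k, of v] by (simp add: M_def m_def y_def)
      next
        case False
        then have "good i" "v = V i" using that by (auto simp: M_def split: if_splits)
        then show ?thesis using V[OF i] False by (simp add: m_def y_def)
      qed
      show "Qr (ratr (alphas i) + intr v - y) \<ge> d i" if "v \<notin> M i" for v
      proof (cases "i = k")
        case True then show ?thesis using that C_diag[OF k, of v] by (simp add: M_def d_def y_def)
      next
        case False
        show ?thesis
        proof (cases "good i")
          case True
          then have "v \<noteq> V i" using that False by (simp add: M_def)
          then have "qq k i (1/2) v \<ge> 23/20" using V[OF i True] by blast
          then show ?thesis using False True by (simp add: d_def y_def)
        next
          case G: False
          then show ?thesis using C_off23[OF k i, of v] mod5_cases[OF k i False] False
            by (simp add: d_def y_def good_def)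
        qed
      qed
    qed
    also have "\<dots> \<le> K i * exp (-2*pi*t*(7/4))"
    proof (rule mult_left_mono[OF _ K0])
      have "7/4 \<le> 4 * m i + d i" by (simp add: m_def d_def)
      then have "t * (7/4) \<le> t * (4 * m i + d i)" using t by (intro mult_left_mono) auto
      then show "exp (-2*pi*t*(4 * m i + d i)) \<le> exp (-2*pi*t*(7/4))"
        using pi_gt_zero by simp
    qed
    finally show ?thesis .
  qed
  define X where "X = (\<Sum>j<5. c k j * (uu (alphas k) (betas j) (s,0) (0,0) + uu (alphas k) (betas j) (s,0) (1,0))^5)"
  have Pk: "P t k j = of_real (exp (-2*pi*t*(5/4))) * (uu (alphas k) (betas j) (s,0) (0,0) + uu (alphas k) (betas j) (s,0) (1,0))^5" for t j
  proof -
    have q: "Qr (ratr (alphas k) + intr v - y) = 1/4" if "v \<in> {(0,0),(1,0)}" for v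
      using C_diag0[OF k that] by (simp add: y_def)
    have "P t k j = (of_real (exp (-2*pi*t*(1/4))) * (uu (alphas k) (betas j) (s,0) (0,0) + uu (alphas k) (betas j) (s,0) (1,0)))^5"
      by (simp add: P_def M_def q l_def algebra_simps)
    also have "\<dots> = of_real (exp (-2*pi*t*(1/4)) ^ 5) * (uu (alphas k) (betas j) (s,0) (0,0) + uu (alphas k) (betas j) (s,0) (1,0))^5"
      by (simp add: power_mult_distrib)
    also have "exp (-2*pi*t*(1/4)) ^ 5 = exp (-2*pi*t*(5/4))"
      by (simp flip: exp_of_nat_mult)
    finally show ?thesis .
  qed
  have Pgood: "(\<Sum>j<5. c i j * P t i j) = 0" if "i < 5" "i \<noteq> k" "good i" for i t
  proof -
    have "P t i j = (e (of_real (Br (ratr (alphas i) + intr (V i)) l)) * of_real (exp (-2*pi*t*Qr (ratr (alphas i) + intr (V i) - y))))^5" for j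
      using that by (simp add: P_def M_def power_mult_distrib uu_pow5)
    then have "(\<Sum>j<5. c i j * P t i j) = (\<Sum>j<5. c i j) * (e (of_real (Br (ratr (alphas i) + intr (V i)) l)) * of_real (exp (-2*pi*t*Qr (ratr (alphas i) + intr (V i) - y))))^5"
      by (simp add: sum_distrib_right)
    then show ?thesis using testA[OF H that(1)] by simp
  qed
  have sumP: "(\<Sum>i<5. \<Sum>j<5. c i j * P t i j) = of_real (exp (-2*pi*t*(5/4))) * X" for t
  proof -
    have "(\<Sum>j<5. c i j * P t i j) = (if i = k then of_real (exp (-2*pi*t*(5/4))) * X else 0)" if "i < 5" for i
    proof (cases "i = k")
      case True then show ?thesis by (simp add: Pk X_def sum_distrib_left algebra_simps)
    next
      case False
      show ?thesis
      proof (cases "good i")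
        case True then show ?thesis using Pgood[OF that False] False by simp
      next
        case G: False then show ?thesis using False by (simp add: P_def M_def)
      qed
    qed
    then have "(\<Sum>i<5. \<Sum>j<5. c i j * P t i j) = (\<Sum>i<5. if i = k then of_real (exp (-2*pi*t*(5/4))) * X else 0)"
      by (intro sum.cong) auto
    also have "\<dots> = of_real (exp (-2*pi*t*(5/4))) * X" using k by (simp add: sum.delta)
    finally show ?thesis .
  qed
  have "X = 0"
  proof (rule vanish[where a="5/4" and b="7/4"])
    fix t :: real assume t: "t \<ge> 1"
    have "norm (\<Sum>i<5. \<Sum>j<5. c i j * P t i j) \<le> (\<Sum>i<5. \<Sum>j<5. norm (c i j) * K i) * exp (-2*pi*t*(7/4))"
    proof (rule comb)
      show "(\<Sum>i<5. \<Sum>j<5. c i j * Th (alphas i) (betas j) y l t ^ 5) = 0"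
        by (rule sum_Th_zero) (use H t in auto)
      show "norm (Th (alphas i) (betas j) y l t ^ 5 - P t i j) \<le> K i * exp (-2*pi*t*(7/4))" if "i < 5" "j < 5" for i j
        by (rule bound[OF that(1) t])
    qed
    then show "norm X * exp (-2*pi*t*(5/4)) \<le> (\<Sum>i<5. \<Sum>j<5. norm (c i j) * K i) * exp (-2*pi*t*(7/4))"
      by (simp add: sumP norm_mult mult.commute)
  qed simp
  then show ?thesis by (simp add: X_def)
qed

lemma e_add: "e (x + y) = e x * e y"
  unfolding e_def by (simp add: distrib_left exp_add)

lemma e_eq_1_real: "e (of_real x) = 1 \<Longrightarrow> \<exists>n::int. x = of_int n"
proof -
  assume "e (of_real x) = 1"
  then obtain n :: int where "2 * pi * x = of_int (2 * n) * pi"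
    unfolding e_def exp_eq_1 by auto
  then have "x = of_int n" using pi_gt_zero by (simp add: algebra_simps)
  then show ?thesis by blast
qed

lemma orth:
  assumes j: "j < 5" "j' < (5::nat)"
  shows "(\<Sum>r<5. e (of_nat r * (2 * (of_nat j - of_nat j') / 5))) = (if j = j' then 5 else 0)"
proof (cases "j = j'")
  case True then show ?thesis by (simp add: e_def)
next
  case False
  define z where "z = e (2 * (of_nat j - of_nat j') / 5)"
  have pw: "e (of_nat r * (2 * (of_nat j - of_nat j') / 5)) = z ^ r" for r
    unfolding z_def e_pow ..
  have z5: "z ^ 5 = 1"
  proof -
    have "z ^ 5 = e (of_int (2 * (int j - int j')))" unfolding z_def e_pow by (rule arg_cong[where f=e]) (simp add: field_simps)
    then show ?thesis by (simp only: e_int)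
  qed
  have z1: "z \<noteq> 1"
  proof
    assume "z = 1"
    then have "e (of_real (2 * (real j - real j') / 5)) = 1" by (simp add: z_def)
    then obtain n :: int where "2 * (real j - real j') / 5 = of_int n" using e_eq_1_real by blast
    then have "2 * (int j - int j') = 5 * n"
      by (simp add: field_simps)
    then show False using j False by presburger
  qed
  have "(\<Sum>r<5. z ^ r) = 0" using geometric_sum[OF z1, of 5] z5 by simp
  then show ?thesis using False by (simp only: pw if_False)
qed

lemma range_e_infinite: "infinite (range (\<lambda>s::real. e (of_real (2 * s))))"
proof
  let ?R = "range (\<lambda>s::real. e (of_real (2 * s)))"
  assume fin: "finite ?R"
  have "continuous_on UNIV (\<lambda>s::real. e (of_real (2 * s)))"
    unfolding e_def by (intro continuous_intros)
  then have "connected ?R"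
    by (rule connected_continuous_image) simp
  then have D: "?R = {} \<or> (\<exists>a. ?R = {a})"
    using connected_finite_iff_sing fin by blast
  have m1: "(1::complex) \<in> ?R" by (rule range_eqI[where x=0]) (simp add: e_def)
  have m2: "(-1::complex) \<in> ?R" by (rule range_eqI[where x="1/4"]) (simp add: e_def)
  obtain a where "?R = {a}" using D m1 by blast
  then have "1 = a" "-1 = a" using m1 m2 by auto
  then show False by simp
qed

lemma alg:
  fixes c :: "nat \<Rightarrow> complex"
  assumes A: "\<And>s::real. (\<Sum>j<5. c j * (1 + e (2 * of_nat j / 5) * e (of_real (2 * s)))^5) = 0"
    and j': "j' < 5"
  shows "c j' = 0"
proof -
  define Tr where "Tr r = (\<Sum>j<5. c j * e (2 * of_nat j / 5) ^ r)" for r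
  define Ac where "Ac r = of_nat (5 choose r) * Tr r" for r
  have expand: "(\<Sum>j<5. c j * (1 + e (2 * of_nat j / 5) * \<mu>)^5) = (\<Sum>r\<le>5. Ac r * \<mu>^r)" for \<mu>
  proof -
    have "(\<Sum>j<5. c j * (1 + e (2 * of_nat j / 5) * \<mu>)^5)
        = (\<Sum>j<5. c j * (\<Sum>r\<le>5. of_nat (5 choose r) * (e (2 * of_nat j / 5) * \<mu>)^r))"
      by (subst add.commute, subst binomial_ring) simp
    also have "\<dots> = (\<Sum>r\<le>5. \<Sum>j<5. c j * (of_nat (5 choose r) * (e (2 * of_nat j / 5) * \<mu>)^r))"
      unfolding sum_distrib_left by (rule sum.swap)
    also have "\<dots> = (\<Sum>r\<le>5. Ac r * \<mu>^r)"
    proof (rule sum.cong[OF refl])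
      fix r
      show "(\<Sum>j<5. c j * (of_nat (5 choose r) * (e (2 * of_nat j / 5) * \<mu>)^r)) = Ac r * \<mu>^r"
        unfolding Ac_def Tr_def sum_distrib_right sum_distrib_left power_mult_distrib
        by (rule sum.cong[OF refl]) (simp only: mult.assoc mult.left_commute)
    qed
    finally show ?thesis .
  qed
  have Ac0: "\<forall>r\<le>5. Ac r = 0"
  proof (rule ccontr)
    assume "\<not> (\<forall>r\<le>5. Ac r = 0)"
    then obtain r where "r \<le> 5" "Ac r \<noteq> 0" by auto
    then have "finite {z. (\<Sum>i\<le>5. Ac i * z^i) = 0}" by (rule polyfun_roots_finite[rotated])
    moreover have "range (\<lambda>s::real. e (of_real (2 * s))) \<subseteq> {z. (\<Sum>i\<le>5. Ac i * z^i) = 0}"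
      using A expand by auto
    ultimately show False using range_e_infinite finite_subset by blast
  qed
  have Tr0: "Tr r = 0" if "r < 5" for r
  proof -
    have "Ac r = 0" using Ac0 that by simp
    moreover have "(5 choose r) \<noteq> 0" using that by simp
    ultimately show ?thesis by (simp add: Ac_def)
  qed
  have "(\<Sum>r<5. e (of_nat r * (- 2 * of_nat j' / 5)) * Tr r) = 0" using Tr0 by simp
  moreover have "(\<Sum>r<5. e (of_nat r * (- 2 * of_nat j' / 5)) * Tr r) = 5 * c j'"
  proof -
    have "(\<Sum>r<5. e (of_nat r * (- 2 * of_nat j' / 5)) * Tr r)
        = (\<Sum>r<5. \<Sum>j<5. c j * e (of_nat r * (2 * (of_nat j - of_nat j') / 5)))"
    proof (rule sum.cong[OF refl])
      fix r assume "r \<in> {..<5::nat}"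
      have "e (of_nat r * (- 2 * of_nat j' / 5)) * e (2 * of_nat j / 5) ^ r = e (of_nat r * (2 * (of_nat j - of_nat j') / 5))" for j
        unfolding e_pow e_add[symmetric] by (rule arg_cong[where f=e]) (simp add: algebra_simps)
      then show "e (of_nat r * (- 2 * of_nat j' / 5)) * Tr r = (\<Sum>j<5. c j * e (of_nat r * (2 * (of_nat j - of_nat j') / 5)))"
        by (simp add: Tr_def sum_distrib_left algebra_simps)
    qed
    also have "\<dots> = (\<Sum>j<5. c j * (\<Sum>r<5. e (of_nat r * (2 * (of_nat j - of_nat j') / 5))))"
      unfolding sum_distrib_left by (rule sum.swap)
    also have "\<dots> = (\<Sum>j<5. c j * (if j = j' then 5 else 0))"
    proof (rule sum.cong[OF refl])
      fix j assume "j \<in> {..<5::nat}"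
      then have "j < 5" by simp
      show "c j * (\<Sum>r<5. e (of_nat r * (2 * (of_nat j - of_nat j') / 5))) = c j * (if j = j' then 5 else 0)"
        by (simp only: orth[OF \<open>j < 5\<close> j'])
    qed
    also have "\<dots> = 5 * c j'" using j' by (simp add: if_distrib sum.delta' mult.commute cong: if_cong)
    finally show ?thesis .
  qed
  ultimately show ?thesis by simp
qed

lemma uu0_eq: "uu (alphas k) (betas j) (s,0) (0,0) = e (of_real (Br (ratr (alphas k)) (s,0)))"
  by (simp add: uu_def B_def intv_def intr_def e_def Br_def)

lemma uu1_eq: "uu (alphas k) (betas j) (s,0) (1,0) = e (of_real (Br (ratr (alphas k)) (s,0))) * (e (2 * of_nat j / 5) * e (of_real (2 * s)))"
proof -
  have b: "B (ratv (betas j)) (intv (1,0)) = 2 * of_nat j / 5"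
    by (simp add: B_def betas_def ratv_def intv_def of_rat_divide)
  have br: "Br (ratr (alphas k) + intr (1,0)) (s,0) = Br (ratr (alphas k)) (s,0) + 2 * s"
    by (simp add: Br_def intr_def algebra_simps)
  show ?thesis unfolding uu_def b br of_real_add e_add by (simp add: algebra_simps)
qed

theorem proposition7p16:
  fixes c :: "nat \<Rightarrow> nat \<Rightarrow> complex"
  assumes "\<And>\<tau> z. Im \<tau> > 0 \<Longrightarrow>
             (\<Sum>i<5. \<Sum>j<5. c i j * (theta (alphas i) (betas j) \<tau> z) ^ 5) = 0"
  shows "\<forall>i<5. \<forall>j<5. c i j = 0"
proof (intro allI impI)
  fix k j' :: nat assume k: "k < 5" and j': "j' < 5"
  show "c k j' = 0"
  proof (rule alg[OF _ j'])
    fix s :: real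
    define g where "g = e (of_real (Br (ratr (alphas k)) (s,0)))"
    have g0: "g \<noteq> 0" using norm_e_real[of "Br (ratr (alphas k)) (s,0)"] by (auto simp: g_def)
    have "0 = (\<Sum>j<5. c k j * (uu (alphas k) (betas j) (s,0) (0,0) + uu (alphas k) (betas j) (s,0) (1,0))^5)"
      using testC[OF assms k, of s] by simp
    also have "\<dots> = g^5 * (\<Sum>j<5. c k j * (1 + e (2 * of_nat j / 5) * e (of_real (2 * s)))^5)"
      unfolding uu0_eq uu1_eq g_def[symmetric] sum_distrib_left
      by (rule sum.cong[OF refl]) (simp add: power_mult_distrib[symmetric] algebra_simps)
    finally show "(\<Sum>j<5. c k j * (1 + e (2 * of_nat j / 5) * e (of_real (2 * s)))^5) = 0"
      using g0 by simp
  qed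
qed


end
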